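(* Let $0<\lambda,\lambda'<1$ and $0<\beta,\beta'<1$. Then $\mathcal{B}'(\lambda',\beta')\cong\mathcal{B}'(\lambda,\beta)$ as $\mathbb{R}$-algebras if and only if $\lambda'=\lambda$ and $\beta'\in\{\beta,1-\beta\}$. In particular, two algebras with $(\lambda',\beta')\neq(\lambda,\beta)$ are isomorphic if and only if $\lambda'=\lambda$ and $\beta'=1-\beta$.
   Context: For real parameters $0<\lambda<1$ and $0<\beta<1$, $\mathcal{B}'(\lambda,\beta)$ denotes the commutative (non-associative) $4$-dimensional real algebra with basis $\{o,a,b,c\}$ whose bilinear commutative multiplication $\circ$ is determined by $o\circ o=o$, $o\circ a=\lambda a$, $o\circ b=\lambda b$, $a\circ a=a$, $b\circ b=b$, $a\circ b=\frac{\lambda-\beta}{\lambda}a+\frac{\lambda+\beta-1}{\lambda}b+c$, and $c\circ x=x\circ c=0$ for every $x$. (In the paper the basis vector $c$ is written $ab$.) *)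

theory Defs
  imports "HOL-Analysis.Analysis"
begin

text \<open>Vectors of the algebra B'(l,b) are elements of real^4, with coordinates
  (x$1, x$2, x$3, x$4) w.r.t. the basis (o, a, b, c).\<close>

definition Bmult :: "real \<Rightarrow> real \<Rightarrow> real^4 \<Rightarrow> real^4 \<Rightarrow> real^4" where
  "Bmult l b x y = vector
     [ x$1 * y$1,
       l * (x$1 * y$2 + x$2 * y$1) + x$2 * y$2 + ((l - b) / l) * (x$2 * y$3 + x$3 * y$2),
       l * (x$1 * y$3 + x$3 * y$1) + x$3 * y$3 + ((l + b - 1) / l) * (x$2 * y$3 + x$3 * y$2),
       x$2 * y$3 + x$3 * y$2 ]"

definition alg_iso :: "('a::real_vector \<Rightarrow> 'a \<Rightarrow> 'a) \<Rightarrow> ('b::real_vector \<Rightarrow> 'b \<Rightarrow> 'b) \<Rightarrow> bool" where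
  "alg_iso m1 m2 \<longleftrightarrow> (\<exists>f. linear f \<and> bij f \<and> (\<forall>x y. f (m1 x y) = m2 (f x) (f y)))"

end

theory Submission
  imports Defs
begin



lemma step4:
  fixes p q p' q' a2 a3 b2 b3 :: real
  assumes ia2: "a2 = a2*a2 + p*(a2*a3+a3*a2)" and ia3: "a3 = a3*a3 + q*(a2*a3+a3*a2)"
    and ib2: "b2 = b2*b2 + p*(b2*b3+b3*b2)" and ib3: "b3 = b3*b3 + q*(b2*b3+b3*b2)"
    and m2: "a2*b2 + p*(a2*b3+a3*b2) = p'*a2 + q'*b2"
    and m3: "a3*b3 + q*(a2*b3+a3*b2) = p'*a3 + q'*b3"
    and s: "p'+q' = p+q" and lt: "p+q<1" and D: "a2*b3 - a3*b2 \<noteq> 0"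
  shows "q' = q \<or> q' = p"
proof -
  have ca2: "a2 = 0 \<or> a2 + 2*p*a3 = 1"
  proof -
    have "a2 * (a2 + 2*p*a3 - 1) = 0" using ia2 by (simp add: algebra_simps)
    then show ?thesis by auto
  qed
  have ca3: "a3 = 0 \<or> a3 + 2*q*a2 = 1"
  proof -
    have "a3 * (a3 + 2*q*a2 - 1) = 0" using ia3 by (simp add: algebra_simps)
    then show ?thesis by auto
  qed
  have cb2: "b2 = 0 \<or> b2 + 2*p*b3 = 1"
  proof -
    have "b2 * (b2 + 2*p*b3 - 1) = 0" using ib2 by (simp add: algebra_simps)
    then show ?thesis by auto
  qed
  have cb3: "b3 = 0 \<or> b3 + 2*q*b2 = 1"
  proof -
    have "b3 * (b3 + 2*q*b2 - 1) = 0" using ib3 by (simp add: algebra_simps)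
    then show ?thesis by auto
  qed
  show ?thesis
  proof (cases "a2 = 0")
    case True
    then have "a3 \<noteq> 0" "b2 \<noteq> 0" using D by auto
    with ca3 True have "a3 = 1" by auto
    with m2 True have "p * b2 = q' * b2" by simp
    with \<open>b2 \<noteq> 0\<close> show ?thesis by simp
  next
    case a2: False
    show ?thesis
    proof (cases "a3 = 0")
      case True
      then have "b3 \<noteq> 0" using D by auto
      with ca2 True a2 have "a2 = 1" by auto
      with m3 True have "q * b3 = q' * b3" by simp
      with \<open>b3 \<noteq> 0\<close> show ?thesis by simp
    next
      case a3: False
      have A2: "a2 + 2*p*a3 = 1" using ca2 a2 by auto
      have A3: "a3 + 2*q*a2 = 1" using ca3 a3 by auto
      show ?thesis
      proof (cases "b2 = 0")
        case True
        then have "b3 \<noteq> 0" using D by auto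
        with cb3 True have "b3 = 1" by auto
        with m2 True have "p * a2 = p' * a2" by simp
        with a2 have "p' = p" by simp
        with s show ?thesis by simp
      next
        case b2: False
        show ?thesis
        proof (cases "b3 = 0")
          case True
          with cb2 b2 have "b2 = 1" by auto
          with m3 True have "q * a3 = p' * a3" by simp
          with a3 have "p' = q" by simp
          with s show ?thesis by simp
        next
          case b3: False
          have B2: "b2 + 2*p*b3 = 1" using cb2 b2 by auto
          have B3: "b3 + 2*q*b2 = 1" using cb3 b3 by auto
          have e1: "a2 - b2 = -2*p*(a3 - b3)" using A2 B2 by (simp add: algebra_simps)
          have e2: "a3 - b3 = -2*q*(a2 - b2)" using A3 B3 by (simp add: algebra_simps)
          have "a3 \<noteq> b3"
          proof
            assume "a3 = b3"
            then have "a2 = b2" using e1 by simp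
            with \<open>a3 = b3\<close> D show False by (simp add: mult.commute)
          qed
          have "(a3 - b3) * (1 - 4*p*q) = 0"
          proof -
            have "a3 - b3 = -2*q*(a2 - b2)" by (rule e2)
            also have "\<dots> = -2*q*(-2*p*(a3 - b3))" by (subst e1) (rule refl)
            finally have "a3 - b3 = -2*q*(-2*p*(a3 - b3))" .
            then have h: "(a3 - b3) - (-2*q*(-2*p*(a3 - b3))) = 0" by simp
            have "(a3 - b3) * (1 - 4*p*q) = (a3 - b3) - (-2*q*(-2*p*(a3 - b3)))"
              by (simp add: algebra_simps)
            with h show ?thesis by simp
          qed
          then have pq: "4*p*q = 1" using \<open>a3 \<noteq> b3\<close> by simp
          have "2*p*(a3 + 2*q*a2) = 2*p" using A3 by simp
          moreover have "2*p*(a3 + 2*q*a2) = 2*p*a3 + (4*p*q)*a2" by (simp add: algebra_simps)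
          ultimately have "2*p = 2*p*a3 + (4*p*q)*a2" by simp
          then have "2*p = 2*p*a3 + a2" using pq by simp
          then have "2*p = 1" using A2 by linarith
          have "(2*p)*(2*q) = 4*p*q" by simp
          then have "2*q = 1" using pq \<open>2*p = 1\<close> by simp
          then have "q = 1/2" by simp
          with \<open>2*p = 1\<close> lt show ?thesis by simp
        qed
      qed
    qed
  qed
qed

lemma step3:
  fixes l l' p q uu vv :: real
  assumes "0<l" "l<1" and s: "p + q = (2*l - 1)/l"
    and iu: "uu = 2*l*uu + uu*uu + 2*p*uu* vv" and iv: "vv = 2*l* vv + vv* vv + 2*q*uu* vv"
    and m1: "l + uu + p* vv = l'" and pu: "p*uu = 0" and qv: "q* vv = 0" and m2: "l + vv + q*uu = l'"
  shows "l' = l"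
proof -
  have h: "l*(p+q) = 2*l-1" using s assms(1) by (simp add: field_simps)
  have "l*(p+q) < l*1" using h assms(2) by simp
  then have lt: "p + q < 1" using assms(1) by (simp add: mult_less_cancel_left_pos)
  have cu: "uu = 0 \<or> uu = 1 - 2*l"
  proof -
    have "2*p*uu* vv = 0" using pu by simp
    then have "uu = 2*l*uu + uu*uu" using iu by linarith
    then have "uu * (1 - 2*l - uu) = 0" by (simp add: algebra_simps)
    then show ?thesis by auto
  qed
  have cv: "vv = 0 \<or> vv = 1 - 2*l"
  proof -
    have "2*q*uu* vv = 0" using qv by auto
    then have "vv = 2*l* vv + vv* vv" using iv by linarith
    then have "vv * (1 - 2*l - vv) = 0" by (simp add: algebra_simps)
    then show ?thesis by auto
  qed
  show ?thesis
  proof (cases "uu = 0")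
    case uu: True
    show ?thesis
    proof (cases "vv = 0")
      case True with uu m1 show ?thesis by simp
    next
      case False
      then have "q = 0" using qv by simp
      have "l + p* vv = l'" using m1 uu by simp
      moreover have "l + vv = l'" using m2 uu by simp
      ultimately have "p* vv = vv" by linarith
      then have "p = 1" using False by simp
      with \<open>q = 0\<close> lt show ?thesis by simp
    qed
  next
    case uu: False
    then have "p = 0" using pu by simp
    show ?thesis
    proof (cases "vv = 0")
      case True
      have "l + uu = l'" using m1 \<open>p = 0\<close> by simp
      moreover have "l + q*uu = l'" using m2 True by simp
      ultimately have "q*uu = uu" by linarith
      then have "q = 1" using uu by simp
      with \<open>p = 0\<close> lt show ?thesis by simp
    next
      case False
      then have "q = 0" using qv by simp
      with \<open>p = 0\<close> s assms(1) have "l = 1/2" by (simp add: field_simps)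
      with cu uu show ?thesis by simp
    qed
  qed
qed


lemma vector_4 [simp]:
 "(vector [x,y,z,w] ::('a::zero)^4)$1 = x"
 "(vector [x,y,z,w] ::('a::zero)^4)$2 = y"
 "(vector [x,y,z,w] ::('a::zero)^4)$3 = z"
 "(vector [x,y,z,w] ::('a::zero)^4)$4 = w"
  unfolding vector_def by simp_all

lemma Bmult_nth [simp]:
  "(Bmult l b x y)$1 = x$1 * y$1"
  "(Bmult l b x y)$2 = l * (x$1 * y$2 + x$2 * y$1) + x$2 * y$2 + ((l - b) / l) * (x$2 * y$3 + x$3 * y$2)"
  "(Bmult l b x y)$3 = l * (x$1 * y$3 + x$3 * y$1) + x$3 * y$3 + ((l + b - 1) / l) * (x$2 * y$3 + x$3 * y$2)"
  "(Bmult l b x y)$4 = x$2 * y$3 + x$3 * y$2"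
  by (simp_all add: Bmult_def)

definition "e1 = (vector [1,0,0,0] :: real^4)"
definition "e2 = (vector [0,1,0,0] :: real^4)"
definition "e3 = (vector [0,0,1,0] :: real^4)"
definition "e4 = (vector [0,0,0,1] :: real^4)"

lemma e_nth [simp]:
  "e1$1 = 1" "e1$2 = 0" "e1$3 = 0" "e1$4 = 0"
  "e2$1 = 0" "e2$2 = 1" "e2$3 = 0" "e2$4 = 0"
  "e3$1 = 0" "e3$2 = 0" "e3$3 = 1" "e3$4 = 0"
  "e4$1 = 0" "e4$2 = 0" "e4$3 = 0" "e4$4 = 1"
  by (simp_all add: e1_def e2_def e3_def e4_def)

lemma decomp: "(x::real^4) = x$1 *\<^sub>R e1 + x$2 *\<^sub>R e2 + x$3 *\<^sub>R e3 + x$4 *\<^sub>R e4"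
  by (simp add: vec_eq_iff forall_4)

lemma prods:
  "Bmult L B0 e1 e1 = e1"
  "Bmult L B0 e1 e2 = L *\<^sub>R e2"
  "Bmult L B0 e1 e3 = L *\<^sub>R e3"
  "Bmult L B0 e2 e2 = e2"
  "Bmult L B0 e3 e3 = e3"
  "Bmult L B0 e2 e3 = ((L-B0)/L) *\<^sub>R e2 + ((L+B0-1)/L) *\<^sub>R e3 + e4"
  "Bmult L B0 e4 z = 0"
  by (simp_all add: vec_eq_iff forall_4)

lemma only_if:
  fixes l b l' b' :: real and f :: "real^4 \<Rightarrow> real^4"
  assumes "0 < l" "l < 1" "0 < l'" "l' < 1" "0 < b" "b < 1" "0 < b'" "b' < 1"
    and lin: "linear f" and bij: "bij f"
    and hom: "\<And>x y. f (Bmult l' b' x y) = Bmult l b (f x) (f y)"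
  shows "l' = l \<and> (b' = b \<or> b' = 1 - b)"
proof -
  define E where "E = f e1"
  define A where "A = f e2"
  define B where "B = f e3"
  define C where "C = f e4"
  define p where "p = (l - b)/l"
  define q where "q = (l + b - 1)/l"
  define p' where "p' = (l' - b')/l'"
  define q' where "q' = (l' + b' - 1)/l'"
  have f0: "f 0 = 0" using lin by (simp add: linear_0)
  have fadd: "\<And>x y. f (x + y) = f x + f y" using lin by (simp add: linear_add)
  have fsc: "\<And>c x. f (c *\<^sub>R x) = c *\<^sub>R f x" using lin by (simp add: linear_scale)
  have inj: "inj f" and surj: "surj f" using bij by (auto simp: bij_def)
  have fdec: "\<And>z. f z = z$1 *\<^sub>R E + z$2 *\<^sub>R A + z$3 *\<^sub>R B + z$4 *\<^sub>R C"
  proof -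
    fix z :: "real^4"
    have "f z = f (z$1 *\<^sub>R e1 + z$2 *\<^sub>R e2 + z$3 *\<^sub>R e3 + z$4 *\<^sub>R e4)"
      using decomp[of z] by simp
    then show "f z = z$1 *\<^sub>R E + z$2 *\<^sub>R A + z$3 *\<^sub>R B + z$4 *\<^sub>R C"
      by (simp add: fadd fsc E_def A_def B_def C_def)
  qed
  obtain z1 where z1: "f z1 = e1" using surj by (metis surjD)
  have "Bmult l b C e1 = 0"
    using hom[of e4 z1] z1 prods(7)[of l' b' z1] f0 by (simp add: C_def)
  then have c1: "C$1 = 0" and c2: "C$2 = 0" and c3: "C$3 = 0"
    using assms(1) by (auto simp: vec_eq_iff forall_4)
  have h11: "Bmult l b E E = E" using hom[of e1 e1] prods(1) by (simp add: E_def)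
  have h12: "Bmult l b E A = l' *\<^sub>R A" using hom[of e1 e2] prods(2) fsc by (simp add: E_def A_def)
  have h13: "Bmult l b E B = l' *\<^sub>R B" using hom[of e1 e3] prods(3) fsc by (simp add: E_def B_def)
  have h22: "Bmult l b A A = A" using hom[of e2 e2] prods(4) by (simp add: A_def)
  have h33: "Bmult l b B B = B" using hom[of e3 e3] prods(5) by (simp add: B_def)
  have h23: "Bmult l b A B = p' *\<^sub>R A + q' *\<^sub>R B + C"
    using hom[of e2 e3] prods(6)[of l' b'] fsc fadd by (simp add: A_def B_def C_def p'_def q'_def)
  have i11: "E$1 * E$1 = E$1" using arg_cong[OF h11, of "\<lambda>v. v$1"] by simp
  have i12: "E$1 * A$1 = l' * A$1" using arg_cong[OF h12, of "\<lambda>v. v$1"] by simp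
  have i13: "E$1 * B$1 = l' * B$1" using arg_cong[OF h13, of "\<lambda>v. v$1"] by simp
  have i22: "A$1 * A$1 = A$1" using arg_cong[OF h22, of "\<lambda>v. v$1"] by simp
  have i33: "B$1 * B$1 = B$1" using arg_cong[OF h33, of "\<lambda>v. v$1"] by simp
  have a1: "A$1 = 0"
  proof (rule ccontr)
    assume "A$1 \<noteq> 0"
    then have "A$1 = 1" using i22 by (metis mult_cancel_left2 mult.commute)
    then have "E$1 = l'" using i12 by simp
    then show False using i11 assms(3,4) by simp
  qed
  have b1: "B$1 = 0"
  proof (rule ccontr)
    assume "B$1 \<noteq> 0"
    then have "B$1 = 1" using i33 by (metis mult_cancel_left2 mult.commute)
    then have "E$1 = l'" using i13 by simp
    then show False using i11 assms(3,4) by simp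
  qed
  have "z1$1 * E$1 = 1" using arg_cong[OF fdec[of z1], of "\<lambda>v. v$1"] z1 a1 b1 c1 by simp
  then have "E$1 \<noteq> 0" by auto
  then have ee1: "E$1 = 1" using i11 by (metis mult_cancel_left2 mult.commute)
  have "C \<noteq> 0"
  proof
    assume "C = 0"
    then have "f e4 = f 0" using f0 by (simp add: C_def)
    then have "e4 = 0" using inj by (simp add: inj_eq)
    then show False using e_nth(16) by simp
  qed
  then have c4: "C$4 \<noteq> 0" using c1 c2 c3 by (auto simp: vec_eq_iff forall_4)
  have D: "A$2 * B$3 - A$3 * B$2 \<noteq> 0"
  proof
    assume D0: "A$2 * B$3 - A$3 * B$2 = 0"
    obtain s t where st: "(s,t) \<noteq> (0,0)" "s * A$2 + t * B$2 = 0" "s * A$3 + t * B$3 = 0"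
    proof (cases "A$2 \<noteq> 0")
      case True
      then show ?thesis using that[of "B$2" "- A$2"] D0 by (simp add: algebra_simps)
    next
      case F2: False
      show ?thesis
      proof (cases "A$3 \<noteq> 0")
        case True
        then show ?thesis using that[of "B$3" "- A$3"] D0 F2 by (simp add: algebra_simps)
      next
        case False
        then show ?thesis using that[of 1 0] F2 by simp
      qed
    qed
    define r where "r = - (s * A$4 + t * B$4) / C$4"
    define z where "z = s *\<^sub>R e2 + t *\<^sub>R e3 + r *\<^sub>R e4"
    have x2: "s * (A$2 * C$4) + t * (B$2 * C$4) = 0"
      using st(2) by (metis distrib_right mult.assoc mult_zero_left)
    have x3: "s * (A$3 * C$4) + t * (B$3 * C$4) = 0"
      using st(3) by (metis distrib_right mult.assoc mult_zero_left)
    have "f z = 0"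
      using x2 x3 a1 b1 c1 c2 c3 c4 unfolding fdec[of z]
      by (simp add: vec_eq_iff forall_4 z_def r_def field_simps)
    then have "z = 0" using inj f0 by (metis injD)
    then have "z$2 = 0" "z$3 = 0" by simp_all
    then have "s = 0" "t = 0" by (simp_all add: z_def)
    then show False using st(1) by simp
  qed
  have E2: "l*(2*E$2) + E$2*E$2 + p*(2*E$2*E$3) = E$2"
    using arg_cong[OF h11, of "\<lambda>v. v$2"] ee1 by (simp add: p_def algebra_simps)
  have E3: "l*(2*E$3) + E$3*E$3 + q*(2*E$2*E$3) = E$3"
    using arg_cong[OF h11, of "\<lambda>v. v$3"] ee1 by (simp add: q_def algebra_simps)
  have EA2: "(l + E$2 + p*E$3 - l') * A$2 + (p*E$2) * A$3 = 0"
    using arg_cong[OF h12, of "\<lambda>v. v$2"] ee1 a1 by (simp add: p_def algebra_simps)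
  have EA3: "(q*E$3) * A$2 + (l + E$3 + q*E$2 - l') * A$3 = 0"
    using arg_cong[OF h12, of "\<lambda>v. v$3"] ee1 a1 by (simp add: q_def algebra_simps)
  have EB2: "(l + E$2 + p*E$3 - l') * B$2 + (p*E$2) * B$3 = 0"
    using arg_cong[OF h13, of "\<lambda>v. v$2"] ee1 b1 by (simp add: p_def algebra_simps)
  have EB3: "(q*E$3) * B$2 + (l + E$3 + q*E$2 - l') * B$3 = 0"
    using arg_cong[OF h13, of "\<lambda>v. v$3"] ee1 b1 by (simp add: q_def algebra_simps)
  have lin2: "m = 0" if "m * A$2 + n * A$3 = 0" "m * B$2 + n * B$3 = 0" for m n
  proof -
    have "m * (A$2 * B$3 - A$3 * B$2) = B$3 * (m * A$2 + n * A$3) - A$3 * (m * B$2 + n * B$3)"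
      by (simp add: algebra_simps)
    then have "m * (A$2 * B$3 - A$3 * B$2) = 0" using that by simp
    then show ?thesis using D by simp
  qed
  have lin3: "n = 0" if "m * A$2 + n * A$3 = 0" "m * B$2 + n * B$3 = 0" for m n
  proof -
    have "n * (A$2 * B$3 - A$3 * B$2) = A$2 * (m * B$2 + n * B$3) - B$2 * (m * A$2 + n * A$3)"
      by (simp add: algebra_simps)
    then have "n * (A$2 * B$3 - A$3 * B$2) = 0" using that by simp
    then show ?thesis using D by simp
  qed
  have m11: "l + E$2 + p*E$3 = l'" using lin2[OF EA2 EB2] by simp
  have m12: "p*E$2 = 0" using lin3[OF EA2 EB2] by simp
  have m21: "q*E$3 = 0" using lin2[OF EA3 EB3] by simp
  have m22: "l + E$3 + q*E$2 = l'" using lin3[OF EA3 EB3] by simp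
  have spq: "p + q = (2*l - 1)/l" using assms(1) by (simp add: p_def q_def field_simps)
  have ll: "l' = l"
    by (rule step3[OF assms(1,2) spq, of "E$2" "E$3"])
       (use E2 E3 m11 m12 m21 m22 in \<open>simp_all add: algebra_simps\<close>)
  have s': "p' + q' = p + q" using ll assms(1) by (simp add: p_def q_def p'_def q'_def field_simps)
  have lt: "p + q < 1"
  proof -
    have h: "l*(p+q) = 2*l-1" using spq assms(1) by (simp add: field_simps)
    have "l*(p+q) < l*1" using h assms(2) by simp
    then show ?thesis using assms(1) by (simp add: mult_less_cancel_left_pos)
  qed
  have ia2: "A$2 = A$2*A$2 + p*(A$2*A$3+A$3*A$2)"
    using arg_cong[OF h22, of "\<lambda>v. v$2"] a1 by (simp add: p_def)
  have ia3: "A$3 = A$3*A$3 + q*(A$2*A$3+A$3*A$2)"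
    using arg_cong[OF h22, of "\<lambda>v. v$3"] a1 by (simp add: q_def)
  have ib2: "B$2 = B$2*B$2 + p*(B$2*B$3+B$3*B$2)"
    using arg_cong[OF h33, of "\<lambda>v. v$2"] b1 by (simp add: p_def)
  have ib3: "B$3 = B$3*B$3 + q*(B$2*B$3+B$3*B$2)"
    using arg_cong[OF h33, of "\<lambda>v. v$3"] b1 by (simp add: q_def)
  have mm2: "A$2*B$2 + p*(A$2*B$3+A$3*B$2) = p'*A$2 + q'*B$2"
    using arg_cong[OF h23, of "\<lambda>v. v$2"] a1 b1 c2 by (simp add: p_def)
  have mm3: "A$3*B$3 + q*(A$2*B$3+A$3*B$2) = p'*A$3 + q'*B$3"
    using arg_cong[OF h23, of "\<lambda>v. v$3"] a1 b1 c3 by (simp add: q_def)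
  have "q' = q \<or> q' = p" by (rule step4[OF ia2 ia3 ib2 ib3 mm2 mm3 s' lt D])
  then have "b' = b \<or> b' = 1 - b"
    using ll assms(1) by (auto simp: p_def q_def q'_def field_simps)
  with ll show ?thesis by simp
qed


lemma iso_swap:
  assumes "0 < l"
  shows "alg_iso (Bmult l (1 - b)) (Bmult l b)"
proof -
  define g :: "real^4 \<Rightarrow> real^4" where "g x = vector [x$1, x$3, x$2, x$4]" for x
  have lin: "linear g"
    by (rule linearI) (simp_all add: g_def vec_eq_iff forall_4)
  have gg: "g \<circ> g = id" by (rule ext) (simp add: g_def vec_eq_iff forall_4)
  have bij: "bij g" using o_bij[OF gg gg] .
  have hom: "\<forall>x y. g (Bmult l (1 - b) x y) = Bmult l b (g x) (g y)"
    using assms by (simp add: g_def vec_eq_iff forall_4 algebra_simps)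
  show ?thesis unfolding alg_iso_def using lin bij hom by blast
qed

lemma iso_id: "alg_iso (Bmult l b) (Bmult l b)"
  unfolding alg_iso_def by (rule exI[of _ id]) (simp add: linear_id)

theorem mainTheorem9:
  fixes l b l' b' :: real
  assumes "0 < l" "l < 1" "0 < l'" "l' < 1" "0 < b" "b < 1" "0 < b'" "b' < 1"
  shows "(alg_iso (Bmult l' b') (Bmult l b) \<longleftrightarrow> l' = l \<and> (b' = b \<or> b' = 1 - b))
       \<and> ((l', b') \<noteq> (l, b) \<longrightarrow>
            (alg_iso (Bmult l' b') (Bmult l b) \<longleftrightarrow> l' = l \<and> b' = 1 - b))"
proof -
  have main: "alg_iso (Bmult l' b') (Bmult l b) \<longleftrightarrow> l' = l \<and> (b' = b \<or> b' = 1 - b)"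
  proof
    assume "alg_iso (Bmult l' b') (Bmult l b)"
    then obtain f where "linear f" "bij f" "\<forall>x y. f (Bmult l' b' x y) = Bmult l b (f x) (f y)"
      unfolding alg_iso_def by blast
    then show "l' = l \<and> (b' = b \<or> b' = 1 - b)"
      using only_if[OF assms] by blast
  next
    assume "l' = l \<and> (b' = b \<or> b' = 1 - b)"
    then show "alg_iso (Bmult l' b') (Bmult l b)"
      using iso_id iso_swap[OF assms(1)] by auto
  qed
  then show ?thesis by auto
qed

end
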